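(* Let $\mathcal T,\mathcal A:\mathbb{R}L_2^{m,n}[a,b]\to\mathbb{R}L_2^{m,n}[a,b]$, $\mathcal B:\mathbb{R}^{n_w}\to\mathbb{R}L_2^{m,n}[a,b]$ and $\mathcal C:\mathbb{R}L_2^{m,n}[a,b]\to\mathbb{R}^{n_z}$ be 4-PI operators. Suppose that both the auxiliary PIE associated with $(\mathcal T,\mathcal A,\mathcal B,\mathcal C)$ and the dual auxiliary PIE associated with $(\mathcal T^*,\mathcal A^*,\mathcal C^*,\mathcal B^* )$ are well-posed. Then $$\|G(\mathcal T,\mathcal A,\mathcal B,\mathcal C)\|_{ip}=\|G(\mathcal T^*,\mathcal A^*,\mathcal C^*,\mathcal B^* )\|_{ip}.$$
   Context: Notation: $\mathbb{R}L_2^{m,n}[a,b]:=\mathbb{R}^m\times L_2^n[a,b]$, the Hilbert space with inner product $\langle (x,\mathbf x),(y,\mathbf y)\rangle=x^\top y+\int_a^b \mathbf x(s)^\top\mathbf y(s)\,ds$. Finite-dimensional spaces $\mathbb{R}^k$ carry the Euclidean inner product and norm, and are identified with $\mathbb{R}L_2^{k,0}$. For a bounded operator $\mathcal P$ between such spaces, $\mathcal P^*$ is its Hilbert adjoint. A 4-PI operator $\mathcal P:\mathbb{R}L_2^{m_1,n_1}[a,b]\to\mathbb{R}L_2^{m_2,n_2}[a,b]$ is one of the form $$\mathcal P\begin{bmatrix}x\\ \mathbf x\end{bmatrix}(s)=\begin{bmatrix}Px+\int_a^b Q_1(\theta)\mathbf x(\theta)\,d\theta\\ Q_2(s)x+R_0(s)\mathbf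 x(s)+\int_a^s R_1(s,\theta)\mathbf x(\theta)\,d\theta+\int_s^b R_2(s,\theta)\mathbf x(\theta)\,d\theta\end{bmatrix},$$ where $P$ is a real matrix and $Q_1,Q_2,R_0,R_1,R_2$ are real matrix-valued polynomials of appropriate dimensions. Such operators are bounded. Auxiliary PIE: given $v\in\mathbb{R}^{n_w}$, a solution is a function $\mathbf x:[0,\infty)\to\mathbb{R}L_2^{m,n}[a,b]$, continuously differentiable in $t$, such that $\frac{d}{dt}(\mathcal T\mathbf x(t))=\mathcal A\mathbf x(t)$ for all $t\ge0$, $\mathcal T\mathbf x(0)=\mathcal B v$, with output $z(t)=\mathcal C\mathbf x(t)\in\mathbb{R}^{n_z}$. The auxiliary PIE is well-posed if for each $v$ such a solution exists and is unique. Dual auxiliary PIE: given $\bar v\in\mathbb{R}^{n_z}$, a solution is a continuously differentiable $\bar{\mathbf x}:[0,\infty)\to\mathbb{R}L_2^{m,n}[a,b]$ with $\frac{d}{dt}(\mathcal T^*\bar{\mathbf x}(t))=\mathcal A^*\bar{\mathbf x}(t)$ for all $t\ge0$, $\mathcal T^*\bar{\mathbf x}(0)=\mathcal C^*\bar v$, and output $\bar z(t)=\mathcal B^*\bar{\mathbf x}(t)\in\mathbb{R}^{n_w}$. It is well-posed if for each $\bar v$ such a solution exists and is unique. Impulse-to-peak norm: $\|G(\mathcal T,\mathcal A,\mathcal B,\mathcal C)\|_{ip}:=\sup\{\sup_{t\ge0}\|z(t)\|: \|v\|=1,\ z \text{ output of a solution of the auxiliary PIE with data } v\}$, and analogously $\|G(\mathcal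 T^*,\mathcal A^*,\mathcal C^*,\mathcal B^* )\|_{ip}:=\sup\{\sup_{t\ge0}\|\bar z(t)\|:\|\bar v\|=1,\ \bar z\text{ output of a solution of the dual auxiliary PIE with data }\bar v\}$ (values in $[0,\infty]$). *)

theory Defs
  imports "HOL-Analysis.Analysis"
begin

text \<open>Elements of RL2^{m,n}[a,b] are represented by pairs (x, f) with
  x :: nat => real (only components i < m matter) and
  f :: real => nat => real (only components j < n on [a,b] matter).
  All equalities in the Hilbert space are taken modulo the seminorm
  (i.e. up to null sets).\<close>

type_synonym rl2 = "(nat \<Rightarrow> real) \<times> (real \<Rightarrow> nat \<Rightarrow> real)"

definition in_RL2 :: "real \<Rightarrow> real \<Rightarrow> nat \<Rightarrow> nat \<Rightarrow> rl2 \<Rightarrow> bool" where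
  "in_RL2 a b m n u \<longleftrightarrow>
     (\<forall>j<n. (\<lambda>s. snd u s j) \<in> borel_measurable (lebesgue_on {a..b})
          \<and> integrable (lebesgue_on {a..b}) (\<lambda>s. (snd u s j)\<^sup>2))"

definition rl_diff :: "rl2 \<Rightarrow> rl2 \<Rightarrow> rl2" where
  "rl_diff u v = (\<lambda>i. fst u i - fst v i, \<lambda>s j. snd u s j - snd v s j)"

definition rl_scale :: "real \<Rightarrow> rl2 \<Rightarrow> rl2" where
  "rl_scale c u = (\<lambda>i. c * fst u i, \<lambda>s j. c * snd u s j)"

definition rl_ip :: "real \<Rightarrow> real \<Rightarrow> nat \<Rightarrow> nat \<Rightarrow> rl2 \<Rightarrow> rl2 \<Rightarrow> real" where
  "rl_ip a b m n u v = (\<Sum>i<m. fst u i * fst v i)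
      + integral\<^sup>L (lebesgue_on {a..b}) (\<lambda>s. \<Sum>j<n. snd u s j * snd v s j)"

definition rl_norm :: "real \<Rightarrow> real \<Rightarrow> nat \<Rightarrow> nat \<Rightarrow> rl2 \<Rightarrow> real" where
  "rl_norm a b m n u = sqrt (rl_ip a b m n u u)"

definition poly_fun :: "(real \<Rightarrow> real) \<Rightarrow> bool" where
  "poly_fun g \<longleftrightarrow> (\<exists>p :: real poly. \<forall>s. g s = poly p s)"

definition bipoly_fun :: "(real \<Rightarrow> real \<Rightarrow> real) \<Rightarrow> bool" where
  "bipoly_fun g \<longleftrightarrow> (\<exists>N (c :: nat \<Rightarrow> nat \<Rightarrow> real).
      \<forall>s \<theta>. g s \<theta> = (\<Sum>i\<le>N. \<Sum>j\<le>N. c i j * s ^ i * \<theta> ^ j))"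

definition PI_params :: "nat \<Rightarrow> nat \<Rightarrow> nat \<Rightarrow> nat \<Rightarrow>
    (real \<Rightarrow> nat \<Rightarrow> nat \<Rightarrow> real) \<Rightarrow> (real \<Rightarrow> nat \<Rightarrow> nat \<Rightarrow> real) \<Rightarrow>
    (real \<Rightarrow> nat \<Rightarrow> nat \<Rightarrow> real) \<Rightarrow> (real \<Rightarrow> real \<Rightarrow> nat \<Rightarrow> nat \<Rightarrow> real) \<Rightarrow>
    (real \<Rightarrow> real \<Rightarrow> nat \<Rightarrow> nat \<Rightarrow> real) \<Rightarrow> bool" where
  "PI_params m1 n1 m2 n2 Q1 Q2 R0 R1 R2 \<longleftrightarrow>
     (\<forall>i<m2. \<forall>j<n1. poly_fun (\<lambda>s. Q1 s i j)) \<and>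
     (\<forall>i<n2. \<forall>j<m1. poly_fun (\<lambda>s. Q2 s i j)) \<and>
     (\<forall>i<n2. \<forall>j<n1. poly_fun (\<lambda>s. R0 s i j)) \<and>
     (\<forall>i<n2. \<forall>j<n1. bipoly_fun (\<lambda>s \<theta>. R1 s \<theta> i j)) \<and>
     (\<forall>i<n2. \<forall>j<n1. bipoly_fun (\<lambda>s \<theta>. R2 s \<theta> i j))"

definition PI4 :: "real \<Rightarrow> real \<Rightarrow> nat \<Rightarrow> nat \<Rightarrow> (nat \<Rightarrow> nat \<Rightarrow> real) \<Rightarrow>
    (real \<Rightarrow> nat \<Rightarrow> nat \<Rightarrow> real) \<Rightarrow> (real \<Rightarrow> nat \<Rightarrow> nat \<Rightarrow> real) \<Rightarrow>
    (real \<Rightarrow> nat \<Rightarrow> nat \<Rightarrow> real) \<Rightarrow> (real \<Rightarrow> real \<Rightarrow> nat \<Rightarrow> nat \<Rightarrow> real) \<Rightarrow>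
    (real \<Rightarrow> real \<Rightarrow> nat \<Rightarrow> nat \<Rightarrow> real) \<Rightarrow> rl2 \<Rightarrow> rl2" where
  "PI4 a b m1 n1 P Q1 Q2 R0 R1 R2 u =
     (\<lambda>i. (\<Sum>j<m1. P i j * fst u j)
          + integral\<^sup>L (lebesgue_on {a..b}) (\<lambda>\<theta>. \<Sum>j<n1. Q1 \<theta> i j * snd u \<theta> j),
      \<lambda>s i. (\<Sum>j<m1. Q2 s i j * fst u j) + (\<Sum>j<n1. R0 s i j * snd u s j)
          + integral\<^sup>L (lebesgue_on {a..s}) (\<lambda>\<theta>. \<Sum>j<n1. R1 s \<theta> i j * snd u \<theta> j)
          + integral\<^sup>L (lebesgue_on {s..b}) (\<lambda>\<theta>. \<Sum>j<n1. R2 s \<theta> i j * snd u \<theta> j))"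

definition is_4PI :: "real \<Rightarrow> real \<Rightarrow> nat \<Rightarrow> nat \<Rightarrow> nat \<Rightarrow> nat \<Rightarrow> (rl2 \<Rightarrow> rl2) \<Rightarrow> bool" where
  "is_4PI a b m1 n1 m2 n2 Op \<longleftrightarrow>
     (\<exists>P Q1 Q2 R0 R1 R2. PI_params m1 n1 m2 n2 Q1 Q2 R0 R1 R2 \<and>
        (\<forall>u. in_RL2 a b m1 n1 u \<longrightarrow> Op u = PI4 a b m1 n1 P Q1 Q2 R0 R1 R2 u))"

definition is_adjoint :: "real \<Rightarrow> real \<Rightarrow> nat \<Rightarrow> nat \<Rightarrow> nat \<Rightarrow> nat \<Rightarrow>
    (rl2 \<Rightarrow> rl2) \<Rightarrow> (rl2 \<Rightarrow> rl2) \<Rightarrow> bool" where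
  "is_adjoint a b m1 n1 m2 n2 Op Ps \<longleftrightarrow>
     (\<forall>y. in_RL2 a b m2 n2 y \<longrightarrow> in_RL2 a b m1 n1 (Ps y)) \<and>
     (\<forall>x y. in_RL2 a b m1 n1 x \<longrightarrow> in_RL2 a b m2 n2 y \<longrightarrow>
        rl_ip a b m2 n2 (Op x) y = rl_ip a b m1 n1 x (Ps y))"

text \<open>Derivative (in the RL2 norm) of a trajectory X : [0,oo) -> RL2^{m,n} at t >= 0
  (one-sided at t = 0).\<close>
definition has_rl_deriv :: "real \<Rightarrow> real \<Rightarrow> nat \<Rightarrow> nat \<Rightarrow> (real \<Rightarrow> rl2) \<Rightarrow> (real \<Rightarrow> rl2) \<Rightarrow> real \<Rightarrow> bool" where
  "has_rl_deriv a b m n X X' t \<longleftrightarrow>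
     ((\<lambda>h. rl_norm a b m n (rl_diff (rl_scale (1 / h) (rl_diff (X (t + h)) (X t))) (X' t)))
        \<longlongrightarrow> 0) (at 0 within {-t..})"

definition rl_C1 :: "real \<Rightarrow> real \<Rightarrow> nat \<Rightarrow> nat \<Rightarrow> (real \<Rightarrow> rl2) \<Rightarrow> bool" where
  "rl_C1 a b m n X \<longleftrightarrow> (\<exists>X'. \<forall>t\<ge>0. in_RL2 a b m n (X' t) \<and> has_rl_deriv a b m n X X' t \<and>
      ((\<lambda>s. rl_norm a b m n (rl_diff (X' s) (X' t))) \<longlongrightarrow> 0) (at t within {0..}))"

text \<open>Solution of the auxiliary PIE d/dt (T x(t)) = A x(t), T x(0) = B v.\<close>
definition aux_sol :: "real \<Rightarrow> real \<Rightarrow> nat \<Rightarrow> nat \<Rightarrow> (rl2 \<Rightarrow> rl2) \<Rightarrow> (rl2 \<Rightarrow> rl2) \<Rightarrow>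
    (rl2 \<Rightarrow> rl2) \<Rightarrow> rl2 \<Rightarrow> (real \<Rightarrow> rl2) \<Rightarrow> bool" where
  "aux_sol a b m n T A B v X \<longleftrightarrow>
     (\<forall>t\<ge>0. in_RL2 a b m n (X t)) \<and> rl_C1 a b m n X \<and>
     (\<forall>t\<ge>0. has_rl_deriv a b m n (\<lambda>t. T (X t)) (\<lambda>t. A (X t)) t) \<and>
     rl_norm a b m n (rl_diff (T (X 0)) (B v)) = 0"

definition well_posed :: "real \<Rightarrow> real \<Rightarrow> nat \<Rightarrow> nat \<Rightarrow> nat \<Rightarrow> (rl2 \<Rightarrow> rl2) \<Rightarrow>
    (rl2 \<Rightarrow> rl2) \<Rightarrow> (rl2 \<Rightarrow> rl2) \<Rightarrow> bool" where
  "well_posed a b m n nw T A B \<longleftrightarrow>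
     (\<forall>v. in_RL2 a b nw 0 v \<longrightarrow>
        (\<exists>X. aux_sol a b m n T A B v X) \<and>
        (\<forall>X Y. aux_sol a b m n T A B v X \<longrightarrow> aux_sol a b m n T A B v Y \<longrightarrow>
           (\<forall>t\<ge>0. rl_norm a b m n (rl_diff (X t) (Y t)) = 0)))"

definition ip_norm :: "real \<Rightarrow> real \<Rightarrow> nat \<Rightarrow> nat \<Rightarrow> nat \<Rightarrow> nat \<Rightarrow> (rl2 \<Rightarrow> rl2) \<Rightarrow>
    (rl2 \<Rightarrow> rl2) \<Rightarrow> (rl2 \<Rightarrow> rl2) \<Rightarrow> (rl2 \<Rightarrow> rl2) \<Rightarrow> ennreal" where
  "ip_norm a b m n nw nz T A B C =
     Sup {ennreal (rl_norm a b nz 0 (C (X t))) | v X t.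
            in_RL2 a b nw 0 v \<and> rl_norm a b nw 0 v = 1 \<and>
            aux_sol a b m n T A B v X \<and> t \<ge> 0}"

end

theory Submission
  imports Defs
begin

definition sqi :: "real \<Rightarrow> real \<Rightarrow> (real \<Rightarrow> real) \<Rightarrow> bool" where
  "sqi a b g \<longleftrightarrow> g \<in> borel_measurable (lebesgue_on {a..b}) \<and> integrable (lebesgue_on {a..b}) (\<lambda>s. (g s)\<^sup>2)"

lemma in_RL2_sqi: "in_RL2 a b m n u \<longleftrightarrow> (\<forall>j<n. sqi a b (\<lambda>s. snd u s j))"
  by (simp add: in_RL2_def sqi_def)

lemma sq_l1: fixes x y :: real shows "2 * \<bar>x * y\<bar> \<le> x\<^sup>2 + y\<^sup>2"
proof -
  have "0 \<le> (\<bar>x\<bar> - \<bar>y\<bar>)\<^sup>2" by simp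
  then show ?thesis by (simp add: power2_diff abs_mult)
qed

lemma sq_l2: fixes x y :: real shows "(x + y)\<^sup>2 \<le> 2 * x\<^sup>2 + 2 * y\<^sup>2"
proof -
  have "0 \<le> (x - y)\<^sup>2" by simp
  then show ?thesis by (simp add: power2_diff power2_sum)
qed

lemma sqi_mult_int:
  assumes "sqi a b f" "sqi a b g"
  shows "integrable (lebesgue_on {a..b}) (\<lambda>s. f s * g s)"
proof (rule Bochner_Integration.integrable_bound[where f="\<lambda>s. (f s)\<^sup>2 + (g s)\<^sup>2"])
  show "integrable (lebesgue_on {a..b}) (\<lambda>s. (f s)\<^sup>2 + (g s)\<^sup>2)" using assms by (simp add: sqi_def)
  show "(\<lambda>s. f s * g s) \<in> borel_measurable (lebesgue_on {a..b})" using assms unfolding sqi_def by (intro borel_measurable_times) auto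
  show "AE x in lebesgue_on {a..b}. norm (f x * g x) \<le> norm ((f x)\<^sup>2 + (g x)\<^sup>2)"
  proof (rule AE_I2)
    fix x
    have "2 * \<bar>f x * g x\<bar> \<le> (f x)\<^sup>2 + (g x)\<^sup>2"
      by (rule sq_l1)
    then show "norm (f x * g x) \<le> norm ((f x)\<^sup>2 + (g x)\<^sup>2)" by simp
  qed
qed

lemma sqi_add:
  assumes "sqi a b f" "sqi a b g"
  shows "sqi a b (\<lambda>s. f s + g s)"
  unfolding sqi_def
proof
  show "(\<lambda>s. f s + g s) \<in> borel_measurable (lebesgue_on {a..b})" using assms by (simp add: sqi_def borel_measurable_add)
  show "integrable (lebesgue_on {a..b}) (\<lambda>s. (f s + g s)\<^sup>2)"
  proof (rule Bochner_Integration.integrable_bound[where f="\<lambda>s. 2*(f s)\<^sup>2 + 2*(g s)\<^sup>2"])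
    show "integrable (lebesgue_on {a..b}) (\<lambda>s. 2*(f s)\<^sup>2 + 2*(g s)\<^sup>2)" using assms by (simp add: sqi_def)
    show "(\<lambda>s. (f s + g s)\<^sup>2) \<in> borel_measurable (lebesgue_on {a..b})" using assms unfolding sqi_def by (intro borel_measurable_power borel_measurable_add) auto
    show "AE x in lebesgue_on {a..b}. norm ((f x + g x)\<^sup>2) \<le> norm (2*(f x)\<^sup>2 + 2*(g x)\<^sup>2)"
    proof (rule AE_I2)
      fix x
      have "(f x + g x)\<^sup>2 \<le> 2*(f x)\<^sup>2 + 2*(g x)\<^sup>2"
        by (rule sq_l2)
      then show "norm ((f x + g x)\<^sup>2) \<le> norm (2*(f x)\<^sup>2 + 2*(g x)\<^sup>2)" by simp
    qed
  qed
qed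

lemma sqi_scale:
  assumes "sqi a b f"
  shows "sqi a b (\<lambda>s. c * f s)"
  using assms by (simp add: sqi_def power_mult_distrib borel_measurable_times)

lemma sqi_zero: "sqi a b (\<lambda>s. 0)"
  by (simp add: sqi_def)

lemma sqi_sum:
  fixes N :: nat
  assumes "\<And>j. j < N \<Longrightarrow> sqi a b (f j)"
  shows "sqi a b (\<lambda>s. \<Sum>j<N. f j s)"
  using assms
proof (induction N)
  case 0 then show ?case by (simp add: sqi_zero)
next
  case (Suc N) then show ?case by (simp add: sqi_add)
qed

lemma sqi_cont:
  assumes "continuous_on {a..b} g"
  shows "sqi a b g"
  unfolding sqi_def
proof
  show "g \<in> borel_measurable (lebesgue_on {a..b})"
    by (rule continuous_imp_measurable_on_sets_lebesgue[OF assms]) simp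
  show "integrable (lebesgue_on {a..b}) (\<lambda>s. (g s)\<^sup>2)"
    by (rule continuous_imp_integrable_real) (intro continuous_intros assms)
qed

lemma sqi_mult_cont:
  assumes p: "continuous_on {a..b} p" and f: "sqi a b f"
  shows "sqi a b (\<lambda>s. p s * f s)"
proof -
  obtain M where M: "\<And>s. s \<in> {a..b} \<Longrightarrow> \<bar>p s\<bar> \<le> M"
    using compact_imp_bounded[OF compact_continuous_image[OF p compact_Icc]]
    by (force simp: bounded_iff)
  show ?thesis unfolding sqi_def
  proof
    show "(\<lambda>s. p s * f s) \<in> borel_measurable (lebesgue_on {a..b})"
      using f continuous_imp_measurable_on_sets_lebesgue[OF p] unfolding sqi_def by (intro borel_measurable_times) auto
    show "integrable (lebesgue_on {a..b}) (\<lambda>s. (p s * f s)\<^sup>2)"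
    proof (rule Bochner_Integration.integrable_bound[where f="\<lambda>s. M\<^sup>2 * (f s)\<^sup>2"])
      show "integrable (lebesgue_on {a..b}) (\<lambda>s. M\<^sup>2 * (f s)\<^sup>2)" using f by (simp add: sqi_def)
      show "(\<lambda>s. (p s * f s)\<^sup>2) \<in> borel_measurable (lebesgue_on {a..b})"
        using f continuous_imp_measurable_on_sets_lebesgue[OF p] unfolding sqi_def by (intro borel_measurable_power borel_measurable_times) auto
      show "AE x in lebesgue_on {a..b}. norm ((p x * f x)\<^sup>2) \<le> norm (M\<^sup>2 * (f x)\<^sup>2)"
      proof (rule AE_I2)
        fix x assume "x \<in> space (lebesgue_on {a..b})"
        then have "\<bar>p x\<bar> \<le> M" using M by simp
        then have "(p x)\<^sup>2 \<le> M\<^sup>2" by (metis abs_ge_zero power2_abs power_mono)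
        then have "(p x * f x)\<^sup>2 \<le> M\<^sup>2 * (f x)\<^sup>2"
          by (simp add: power_mult_distrib mult_right_mono)
        then show "norm ((p x * f x)\<^sup>2) \<le> norm (M\<^sup>2 * (f x)\<^sup>2)" by simp
      qed
    qed
  qed
qed

lemma in_RL2_diff: "in_RL2 a b m n u \<Longrightarrow> in_RL2 a b m n v \<Longrightarrow> in_RL2 a b m n (rl_diff u v)"
  unfolding in_RL2_sqi rl_diff_def using sqi_add sqi_scale[where c="-1"] by fastforce

lemma in_RL2_scale: "in_RL2 a b m n u \<Longrightarrow> in_RL2 a b m n (rl_scale c u)"
  unfolding in_RL2_sqi rl_scale_def using sqi_scale by fastforce

lemma ip_integrable:
  assumes "in_RL2 a b m n u" "in_RL2 a b m n v"
  shows "integrable (lebesgue_on {a..b}) (\<lambda>s. \<Sum>j<n. snd u s j * snd v s j)"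
  using assms unfolding in_RL2_sqi by (intro Bochner_Integration.integrable_sum sqi_mult_int) auto

lemma ip_sym: "rl_ip a b m n u v = rl_ip a b m n v u"
  unfolding rl_ip_def by (simp add: mult.commute)

lemma ip_nonneg: "0 \<le> rl_ip a b m n u u"
  unfolding rl_ip_def by (intro add_nonneg_nonneg sum_nonneg integral_nonneg_AE AE_I2) auto

lemma ip_diff_left:
  assumes "in_RL2 a b m n u" "in_RL2 a b m n v" "in_RL2 a b m n w"
  shows "rl_ip a b m n (rl_diff u v) w = rl_ip a b m n u w - rl_ip a b m n v w"
proof -
  have "(\<lambda>s. \<Sum>j<n. snd (rl_diff u v) s j * snd w s j) =
        (\<lambda>s. (\<Sum>j<n. snd u s j * snd w s j) - (\<Sum>j<n. snd v s j * snd w s j))"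
    by (simp add: rl_diff_def sum_subtractf left_diff_distrib)
  then show ?thesis
    using ip_integrable[OF assms(1,3)] ip_integrable[OF assms(2,3)]
    by (simp add: rl_ip_def rl_diff_def sum_subtractf left_diff_distrib)
qed

lemma ip_scale_left:
  "rl_ip a b m n (rl_scale c u) w = c * rl_ip a b m n u w"
proof -
  have "(\<lambda>s. \<Sum>j<n. snd (rl_scale c u) s j * snd w s j) =
        (\<lambda>s. c * (\<Sum>j<n. snd u s j * snd w s j))"
    by (simp add: rl_scale_def sum_distrib_left mult.assoc)
  then show ?thesis
    unfolding rl_ip_def by (simp add: rl_scale_def sum_distrib_left[symmetric] mult.assoc distrib_left)
qed

lemma ip_diff_right:
  assumes "in_RL2 a b m n u" "in_RL2 a b m n v" "in_RL2 a b m n w"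
  shows "rl_ip a b m n w (rl_diff u v) = rl_ip a b m n w u - rl_ip a b m n w v"
  using ip_diff_left[OF assms] ip_sym by metis

lemma ip_scale_right:
  "rl_ip a b m n w (rl_scale c u) = c * rl_ip a b m n w u"
  using ip_scale_left ip_sym by metis

lemma quad_discr:
  fixes A B C :: real
  assumes "\<And>l. 0 \<le> A - 2 * l * B + l\<^sup>2 * C" "0 \<le> A" "0 \<le> C"
  shows "B\<^sup>2 \<le> A * C"
proof (cases "C = 0")
  case True
  have "B = 0"
  proof (rule ccontr)
    assume "B \<noteq> 0"
    have "0 \<le> A - 2 * ((A + 1) / (2 * B)) * B + ((A + 1) / (2 * B))\<^sup>2 * C" by (rule assms(1))
    also have "\<dots> = -1" using True \<open>B \<noteq> 0\<close> by (simp add: field_simps)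
    finally show False by simp
  qed
  then show ?thesis using assms by simp
next
  case False
  then have C: "C > 0" using assms by simp
  have "0 \<le> A - 2 * (B / C) * B + (B / C)\<^sup>2 * C" by (rule assms(1))
  also have "\<dots> = A - B\<^sup>2 / C" using C by (simp add: field_simps power2_eq_square)
  finally have "B\<^sup>2 / C \<le> A" by simp
  then show ?thesis using C by (simp add: divide_le_eq mult.commute)
qed

lemma ip_CS:
  assumes u: "in_RL2 a b m n u" and v: "in_RL2 a b m n v"
  shows "\<bar>rl_ip a b m n u v\<bar> \<le> rl_norm a b m n u * rl_norm a b m n v"
proof -
  let ?ip = "rl_ip a b m n"
  have "(?ip u v)\<^sup>2 \<le> ?ip u u * ?ip v v"
  proof (rule quad_discr)
    fix l
    have sv: "in_RL2 a b m n (rl_scale l v)" using v by (rule in_RL2_scale)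
    have "0 \<le> ?ip (rl_diff u (rl_scale l v)) (rl_diff u (rl_scale l v))" by (rule ip_nonneg)
    also have "\<dots> = ?ip u u - 2 * l * ?ip u v + l\<^sup>2 * ?ip v v"
      using u v sv in_RL2_diff[OF u sv]
      by (simp add: ip_diff_left ip_diff_right ip_scale_left ip_scale_right ip_sym[of a b m n v u]
          power2_eq_square algebra_simps)
    finally show "0 \<le> ?ip u u - 2 * l * ?ip u v + l\<^sup>2 * ?ip v v" .
  qed (auto intro: ip_nonneg)
  then have "sqrt ((?ip u v)\<^sup>2) \<le> sqrt (?ip u u * ?ip v v)" by (rule real_sqrt_le_mono)
  then show ?thesis by (simp add: rl_norm_def real_sqrt_mult)
qed

lemma norm_nonneg_rl: "0 \<le> rl_norm a b m n u"
  by (simp add: rl_norm_def ip_nonneg)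

lemma norm_sq_rl: "(rl_norm a b m n u)\<^sup>2 = rl_ip a b m n u u"
  by (simp add: rl_norm_def ip_nonneg)

lemma norm_triangle_rl:
  assumes u: "in_RL2 a b m n u" and v: "in_RL2 a b m n v"
  shows "rl_norm a b m n u \<le> rl_norm a b m n (rl_diff u v) + rl_norm a b m n v"
proof -
  let ?ip = "rl_ip a b m n" and ?nm = "rl_norm a b m n"
  define d where "d = rl_diff u v"
  have d: "in_RL2 a b m n d" unfolding d_def using u v by (rule in_RL2_diff)
  have "?ip u u = ?ip d d + 2 * ?ip d v + ?ip v v"
    unfolding d_def using u v
    by (simp add: ip_diff_left ip_diff_right in_RL2_diff ip_sym[of a b m n v u])
  also have "\<dots> \<le> (?nm d)\<^sup>2 + 2 * (?nm d * ?nm v) + (?nm v)\<^sup>2"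
    using ip_CS[OF d v] by (simp add: norm_sq_rl)
  also have "\<dots> = (?nm d + ?nm v)\<^sup>2" by (simp add: power2_sum)
  finally have "(?nm u)\<^sup>2 \<le> (?nm d + ?nm v)\<^sup>2" by (simp add: norm_sq_rl)
  then show ?thesis unfolding d_def
    using norm_nonneg_rl[of a b m n "rl_diff u v"] norm_nonneg_rl[of a b m n v]
    by (meson add_nonneg_nonneg power2_le_imp_le)
qed

lemma ip_norm0_eq:
  assumes u: "in_RL2 a b m n u" and v: "in_RL2 a b m n v" and w: "in_RL2 a b m n w"
    and z: "rl_norm a b m n (rl_diff u v) = 0"
  shows "rl_ip a b m n u w = rl_ip a b m n v w"
proof -
  have "\<bar>rl_ip a b m n (rl_diff u v) w\<bar> \<le> 0"
    using ip_CS[OF in_RL2_diff[OF u v] w] z by simp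
  then show ?thesis using ip_diff_left[OF u v w] by simp
qed

lemma poly_fun_cont: "poly_fun g \<Longrightarrow> continuous_on S g"
proof -
  assume "poly_fun g"
  then obtain p where "\<And>s. g s = poly p s" by (auto simp: poly_fun_def)
  then have "g = (\<lambda>s. poly p s)" by auto
  then show ?thesis by (simp add: continuous_on_poly continuous_on_id)
qed

lemma int_cont_left:
  assumes g: "integrable (lebesgue_on {a..b}) g"
  shows "continuous_on {a..b} (\<lambda>s. integral\<^sup>L (lebesgue_on {a..s}) (g::real\<Rightarrow>real))"
proof (rule continuous_on_eq[OF indefinite_integral_continuous_1])
  show "g integrable_on {a..b}" using g by (simp add: integrable_on_lebesgue_on)
  fix s assume "s \<in> {a..b}"
  then have "integrable (lebesgue_on {a..s}) g" using g by (intro integrable_subinterval[OF g]) auto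
  then show "integral {a..s} g = integral\<^sup>L (lebesgue_on {a..s}) g"
    by (simp add: lebesgue_integral_eq_integral)
qed

lemma int_cont_right:
  assumes g: "integrable (lebesgue_on {a..b}) g"
  shows "continuous_on {a..b} (\<lambda>s. integral\<^sup>L (lebesgue_on {s..b}) (g::real\<Rightarrow>real))"
proof (rule continuous_on_eq[OF indefinite_integral_continuous_1'])
  show "g integrable_on {a..b}" using g by (simp add: integrable_on_lebesgue_on)
  fix s assume "s \<in> {a..b}"
  then have "integrable (lebesgue_on {s..b}) g" using g by (intro integrable_subinterval[OF g]) auto
  then show "integral {s..b} g = integral\<^sup>L (lebesgue_on {s..b}) g"
    by (simp add: lebesgue_integral_eq_integral)
qed

lemma sqi_pow_int:
  assumes "sqi a b f"
  shows "integrable (lebesgue_on {a..b}) (\<lambda>\<theta>. \<theta> ^ l * f \<theta>)"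
  using sqi_mult_int[OF sqi_cont[of a b "\<lambda>\<theta>. \<theta> ^ l"] assms] by (simp add: continuous_intros)

lemma bipoly_expand:
  fixes K :: "real \<Rightarrow> real \<Rightarrow> real"
  assumes "\<forall>s \<theta>. K s \<theta> = (\<Sum>i\<le>N. \<Sum>j\<le>N. c i j * s ^ i * \<theta> ^ j)"
  shows "K s \<theta> * f \<theta> = (\<Sum>i\<le>N. \<Sum>j\<le>N. (c i j * s ^ i) * (\<theta> ^ j * f \<theta>))"
proof -
  have "K s \<theta> * f \<theta> = (\<Sum>i\<le>N. \<Sum>j\<le>N. c i j * s ^ i * \<theta> ^ j) * f \<theta>"
    using assms by (metis (no_types))
  also have "\<dots> = (\<Sum>i\<le>N. \<Sum>j\<le>N. c i j * s ^ i * \<theta> ^ j * f \<theta>)" by (simp add: sum_distrib_right)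
  also have "\<dots> = (\<Sum>i\<le>N. \<Sum>j\<le>N. (c i j * s ^ i) * (\<theta> ^ j * f \<theta>))" by (simp add: mult.assoc)
  finally show ?thesis .
qed

lemma bipoly_int:
  assumes K: "bipoly_fun K" and f: "sqi a b f" and sub: "{c..d} \<subseteq> {a..b}"
  shows "integrable (lebesgue_on {c..d}) (\<lambda>\<theta>. K s \<theta> * f \<theta>)"
proof -
  obtain N cc where e: "\<forall>s \<theta>. K s \<theta> = (\<Sum>i\<le>N. \<Sum>j\<le>N. cc i j * s ^ i * \<theta> ^ j)"
    using K by (auto simp: bipoly_fun_def)
  have "integrable (lebesgue_on {c..d}) (\<lambda>\<theta>. \<Sum>i\<le>N. \<Sum>j\<le>N. (cc i j * s ^ i) * (\<theta> ^ j * f \<theta>))"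
    using integrable_subinterval[OF sqi_pow_int[OF f] sub]
    by (intro Bochner_Integration.integrable_sum integrable_mult_right) auto
  then show ?thesis using bipoly_expand[OF e] by simp
qed

lemma bipoly_int_eq:
  assumes e: "\<forall>s \<theta>. K s \<theta> = (\<Sum>i\<le>N. \<Sum>j\<le>N. cc i j * s ^ i * \<theta> ^ j)"
    and f: "sqi a b f" and sub: "{c..d} \<subseteq> {a..b}"
  shows "integral\<^sup>L (lebesgue_on {c..d}) (\<lambda>\<theta>. K s \<theta> * f \<theta>) =
     (\<Sum>i\<le>N. \<Sum>j\<le>N. (cc i j * s ^ i) * integral\<^sup>L (lebesgue_on {c..d}) (\<lambda>\<theta>. \<theta> ^ j * f \<theta>))"
proof -
  have I: "\<And>j. integrable (lebesgue_on {c..d}) (\<lambda>\<theta>. \<theta> ^ j * f \<theta>)"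
    using integrable_subinterval[OF sqi_pow_int[OF f] sub] .
  have "integral\<^sup>L (lebesgue_on {c..d}) (\<lambda>\<theta>. K s \<theta> * f \<theta>) =
     integral\<^sup>L (lebesgue_on {c..d}) (\<lambda>\<theta>. \<Sum>i\<le>N. \<Sum>j\<le>N. (cc i j * s ^ i) * (\<theta> ^ j * f \<theta>))"
    using bipoly_expand[OF e] by simp
  also have "\<dots> = (\<Sum>i\<le>N. \<Sum>j\<le>N. (cc i j * s ^ i) * integral\<^sup>L (lebesgue_on {c..d}) (\<lambda>\<theta>. \<theta> ^ j * f \<theta>))"
    using I by (simp add: Bochner_Integration.integral_sum Bochner_Integration.integrable_sum)
  finally show ?thesis .
qed

lemma bipoly_cont_left:
  assumes K: "bipoly_fun K" and f: "sqi a b f"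
  shows "continuous_on {a..b} (\<lambda>s. integral\<^sup>L (lebesgue_on {a..s}) (\<lambda>\<theta>. K s \<theta> * f \<theta>))"
proof -
  obtain N cc where e: "\<forall>s \<theta>. K s \<theta> = (\<Sum>i\<le>N. \<Sum>j\<le>N. cc i j * s ^ i * \<theta> ^ j)"
    using K by (auto simp: bipoly_fun_def)
  have "continuous_on {a..b} (\<lambda>s. \<Sum>i\<le>N. \<Sum>j\<le>N. (cc i j * s ^ i) * integral\<^sup>L (lebesgue_on {a..s}) (\<lambda>\<theta>. \<theta> ^ j * f \<theta>))"
    using int_cont_left[OF sqi_pow_int[OF f]]
    by (intro continuous_intros) auto
  then show ?thesis
    by (rule continuous_on_eq) (use bipoly_int_eq[OF e f] in auto)
qed

lemma bipoly_cont_right: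
  assumes K: "bipoly_fun K" and f: "sqi a b f"
  shows "continuous_on {a..b} (\<lambda>s. integral\<^sup>L (lebesgue_on {s..b}) (\<lambda>\<theta>. K s \<theta> * f \<theta>))"
proof -
  obtain N cc where e: "\<forall>s \<theta>. K s \<theta> = (\<Sum>i\<le>N. \<Sum>j\<le>N. cc i j * s ^ i * \<theta> ^ j)"
    using K by (auto simp: bipoly_fun_def)
  have "continuous_on {a..b} (\<lambda>s. \<Sum>i\<le>N. \<Sum>j\<le>N. (cc i j * s ^ i) * integral\<^sup>L (lebesgue_on {s..b}) (\<lambda>\<theta>. \<theta> ^ j * f \<theta>))"
    using int_cont_right[OF sqi_pow_int[OF f]]
    by (intro continuous_intros) auto
  then show ?thesis
    by (rule continuous_on_eq) (use bipoly_int_eq[OF e f] in auto)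
qed

lemma sum_int_cont_left:
  assumes K: "\<And>j. j < N \<Longrightarrow> bipoly_fun (K j)" and f: "\<And>j. j < N \<Longrightarrow> sqi a b (f j)"
  shows "continuous_on {a..b} (\<lambda>s. integral\<^sup>L (lebesgue_on {a..s}) (\<lambda>\<theta>. \<Sum>j<N. K j s \<theta> * f j \<theta>))"
proof -
  have "continuous_on {a..b} (\<lambda>s. \<Sum>j<N. integral\<^sup>L (lebesgue_on {a..s}) (\<lambda>\<theta>. K j s \<theta> * f j \<theta>))"
    using bipoly_cont_left[OF K f] by (intro continuous_on_sum) auto
  then show ?thesis
    by (rule continuous_on_eq)
       (use bipoly_int[OF K f] in \<open>auto simp: Bochner_Integration.integral_sum\<close>)
qed

lemma sum_int_cont_right:
  assumes K: "\<And>j. j < N \<Longrightarrow> bipoly_fun (K j)" and f: "\<And>j. j < N \<Longrightarrow> sqi a b (f j)"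
  shows "continuous_on {a..b} (\<lambda>s. integral\<^sup>L (lebesgue_on {s..b}) (\<lambda>\<theta>. \<Sum>j<N. K j s \<theta> * f j \<theta>))"
proof -
  have "continuous_on {a..b} (\<lambda>s. \<Sum>j<N. integral\<^sup>L (lebesgue_on {s..b}) (\<lambda>\<theta>. K j s \<theta> * f j \<theta>))"
    using bipoly_cont_right[OF K f] by (intro continuous_on_sum) auto
  then show ?thesis
    by (rule continuous_on_eq)
       (use bipoly_int[OF K f] in \<open>auto simp: Bochner_Integration.integral_sum\<close>)
qed

lemma PI4_RL2:
  assumes p: "PI_params m1 n1 m2 n2 Q1 Q2 R0 R1 R2" and u: "in_RL2 a b m1 n1 u"
  shows "in_RL2 a b m2 n2 (PI4 a b m1 n1 P Q1 Q2 R0 R1 R2 u)"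
  unfolding in_RL2_sqi
proof (intro allI impI)
  fix i assume i: "i < n2"
  have f: "\<And>j. j < n1 \<Longrightarrow> sqi a b (\<lambda>s. snd u s j)" using u by (simp add: in_RL2_sqi)
  have s1: "sqi a b (\<lambda>s. \<Sum>j<m1. Q2 s i j * fst u j)"
    using p i by (intro sqi_cont continuous_on_sum continuous_on_mult_right poly_fun_cont) (auto simp: PI_params_def)
  have s2: "sqi a b (\<lambda>s. \<Sum>j<n1. R0 s i j * snd u s j)"
    using p i f by (intro sqi_sum sqi_mult_cont poly_fun_cont) (auto simp: PI_params_def)
  have s3: "sqi a b (\<lambda>s. integral\<^sup>L (lebesgue_on {a..s}) (\<lambda>\<theta>. \<Sum>j<n1. R1 s \<theta> i j * snd u \<theta> j))"
    using sum_int_cont_left[of n1 "\<lambda>j s \<theta>. R1 s \<theta> i j" a b "\<lambda>j \<theta>. snd u \<theta> j"] p i f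
    by (intro sqi_cont) (auto simp: PI_params_def)
  have s4: "sqi a b (\<lambda>s. integral\<^sup>L (lebesgue_on {s..b}) (\<lambda>\<theta>. \<Sum>j<n1. R2 s \<theta> i j * snd u \<theta> j))"
    using sum_int_cont_right[of n1 "\<lambda>j s \<theta>. R2 s \<theta> i j" a b "\<lambda>j \<theta>. snd u \<theta> j"] p i f
    by (intro sqi_cont) (auto simp: PI_params_def)
  show "sqi a b (\<lambda>s. snd (PI4 a b m1 n1 P Q1 Q2 R0 R1 R2 u) s i)"
    unfolding PI4_def snd_conv using sqi_add[OF sqi_add[OF sqi_add[OF s1 s2] s3] s4] .
qed

lemma is_4PI_RL2:
  assumes "is_4PI a b m1 n1 m2 n2 Op" "in_RL2 a b m1 n1 u"
  shows "in_RL2 a b m2 n2 (Op u)"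
  using assms PI4_RL2 unfolding is_4PI_def by metis

lemma ip_quot:
  assumes "h \<noteq> 0" "in_RL2 a b m n p" "in_RL2 a b m n q" "in_RL2 a b m n w"
  shows "rl_ip a b m n (rl_scale (1/h) (rl_diff p q)) w = (rl_ip a b m n p w - rl_ip a b m n q w) / h"
  using assms by (simp add: ip_scale_left ip_diff_left)

lemma lim_ip:
  assumes ev: "eventually (\<lambda>h. in_RL2 a b m n (Q h)) F"
    and L: "in_RL2 a b m n L" and w: "in_RL2 a b m n w"
    and d: "((\<lambda>h. rl_norm a b m n (rl_diff (Q h) L)) \<longlongrightarrow> 0) F"
  shows "((\<lambda>h. rl_ip a b m n (Q h) w) \<longlongrightarrow> rl_ip a b m n L w) F"
proof -
  have "((\<lambda>h. rl_ip a b m n (Q h) w - rl_ip a b m n L w) \<longlongrightarrow> 0) F"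
  proof (rule Lim_null_comparison)
    show "eventually (\<lambda>h. norm (rl_ip a b m n (Q h) w - rl_ip a b m n L w)
              \<le> rl_norm a b m n (rl_diff (Q h) L) * rl_norm a b m n w) F"
      using ev
    proof eventually_elim
      case (elim h)
      then show ?case
        using ip_CS[OF in_RL2_diff[OF elim L] w] ip_diff_left[OF elim L w] by simp
    qed
    show "((\<lambda>h. rl_norm a b m n (rl_diff (Q h) L) * rl_norm a b m n w) \<longlongrightarrow> 0) F"
      using tendsto_mult_left_zero[OF d] by simp
  qed
  then show ?thesis by (rule LIM_zero_cancel)
qed

lemma alg:
  fixes h :: real
  assumes "h \<noteq> 0" "q = ((P - Xz0) / h - (x0Z - Q) / h) / h"
  shows "(P - Q) / h = (Xz0 - Q) / h + (x0Z - Q) / h + h * q"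
proof -
  have "h * q = (P - Xz0) / h - (x0Z - Q) / h" using assms by simp
  then show ?thesis by (simp add: diff_divide_distrib)
qed

lemma prod_rule:
  fixes F :: "real filter"
  assumes ev: "eventually (\<lambda>h. h \<noteq> 0 \<and> in_RL2 a b m n (X h) \<and> in_RL2 a b m n (Z h)) F"
    and x0: "in_RL2 a b m n x0" and z0: "in_RL2 a b m n z0"
    and x': "in_RL2 a b m n x'" and z': "in_RL2 a b m n z'"
    and dX: "((\<lambda>h. rl_norm a b m n (rl_diff (rl_scale (1/h) (rl_diff (X h) x0)) x')) \<longlongrightarrow> 0) F"
    and dZ: "((\<lambda>h. rl_norm a b m n (rl_diff (rl_scale (1/h) (rl_diff (Z h) z0)) z')) \<longlongrightarrow> 0) F"
    and h0: "((\<lambda>h. h) \<longlongrightarrow> 0) F"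
  shows "((\<lambda>h. (rl_ip a b m n (X h) (Z h) - rl_ip a b m n x0 z0) / h) \<longlongrightarrow>
            rl_ip a b m n x' z0 + rl_ip a b m n x0 z') F"
proof -
  let ?ip = "rl_ip a b m n" and ?nm = "rl_norm a b m n"
  define QX where "QX h = rl_scale (1/h) (rl_diff (X h) x0)" for h
  define QZ where "QZ h = rl_scale (1/h) (rl_diff (Z h) z0)" for h
  have evQ: "eventually (\<lambda>h. in_RL2 a b m n (QX h) \<and> in_RL2 a b m n (QZ h)) F"
    using ev by eventually_elim (simp add: QX_def QZ_def in_RL2_scale in_RL2_diff x0 z0)
  have evQX: "eventually (\<lambda>h. in_RL2 a b m n (QX h)) F" using evQ by eventually_elim simp
  have evQZ: "eventually (\<lambda>h. in_RL2 a b m n (QZ h)) F" using evQ by eventually_elim simp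
  have eq: "eventually (\<lambda>h. (?ip (X h) (Z h) - ?ip x0 z0) / h =
      ?ip (QX h) z0 + ?ip x0 (QZ h) + h * ?ip (QX h) (QZ h)) F"
    using ev evQ
  proof eventually_elim
    case (elim h)
    then have h: "h \<noteq> 0" and X: "in_RL2 a b m n (X h)" and Z: "in_RL2 a b m n (Z h)"
      and QX: "in_RL2 a b m n (QX h)" and QZ: "in_RL2 a b m n (QZ h)" by auto
    have 1: "?ip (QX h) w = (?ip (X h) w - ?ip x0 w) / h" if "in_RL2 a b m n w" for w
      unfolding QX_def by (rule ip_quot[OF h X x0 that])
    have 2: "?ip w (QZ h) = (?ip w (Z h) - ?ip w z0) / h" if "in_RL2 a b m n w" for w
    proof -
      have "?ip w (QZ h) = ?ip (QZ h) w" by (rule ip_sym)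
      also have "\<dots> = (?ip (Z h) w - ?ip z0 w) / h" unfolding QZ_def by (rule ip_quot[OF h Z z0 that])
      also have "\<dots> = (?ip w (Z h) - ?ip w z0) / h" by (simp only: ip_sym[of a b m n w])
      finally show ?thesis .
    qed
    have "?ip (QX h) (QZ h) = (?ip (X h) (QZ h) - ?ip x0 (QZ h)) / h" using 1[OF QZ] .
    also have "\<dots> = ((?ip (X h) (Z h) - ?ip (X h) z0) / h - (?ip x0 (Z h) - ?ip x0 z0) / h) / h"
      using 2[OF X] 2[OF x0] by simp
    finally have A: "?ip (QX h) (QZ h) = ((?ip (X h) (Z h) - ?ip (X h) z0) / h - (?ip x0 (Z h) - ?ip x0 z0) / h) / h" .
    have B: "?ip (QX h) z0 = (?ip (X h) z0 - ?ip x0 z0) / h" using 1[OF z0] .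
    have C: "?ip x0 (QZ h) = (?ip x0 (Z h) - ?ip x0 z0) / h" using 2[OF x0] .
    show ?case unfolding B C by (rule alg[OF h A])
  qed
  have t1: "((\<lambda>h. ?ip (QX h) z0) \<longlongrightarrow> ?ip x' z0) F"
    by (rule lim_ip[OF evQX x' z0]) (use dX in \<open>simp add: QX_def\<close>)
  have t2': "((\<lambda>h. ?ip (QZ h) x0) \<longlongrightarrow> ?ip z' x0) F"
    by (rule lim_ip[OF evQZ z' x0]) (use dZ in \<open>simp add: QZ_def\<close>)
  have t2: "((\<lambda>h. ?ip x0 (QZ h)) \<longlongrightarrow> ?ip x0 z') F"
    using t2' by (simp add: ip_sym[of a b m n x0])
  have t3: "((\<lambda>h. h * ?ip (QX h) (QZ h)) \<longlongrightarrow> 0) F"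
  proof (rule Lim_null_comparison)
    show "eventually (\<lambda>h. norm (h * ?ip (QX h) (QZ h)) \<le>
        \<bar>h\<bar> * ((?nm (rl_diff (QX h) x') + ?nm x') * (?nm (rl_diff (QZ h) z') + ?nm z'))) F"
      using evQ
    proof eventually_elim
      case (elim h)
      then have QX: "in_RL2 a b m n (QX h)" and QZ: "in_RL2 a b m n (QZ h)" by auto
      have "\<bar>?ip (QX h) (QZ h)\<bar> \<le> ?nm (QX h) * ?nm (QZ h)" by (rule ip_CS[OF QX QZ])
      also have "\<dots> \<le> (?nm (rl_diff (QX h) x') + ?nm x') * (?nm (rl_diff (QZ h) z') + ?nm z')"
        by (intro mult_mono norm_triangle_rl QX QZ x' z' norm_nonneg_rl add_nonneg_nonneg)
      finally show ?case by (simp add: abs_mult mult_left_mono)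
    qed
    have "((\<lambda>h. \<bar>h\<bar> * ((?nm (rl_diff (QX h) x') + ?nm x') * (?nm (rl_diff (QZ h) z') + ?nm z')))
        \<longlongrightarrow> \<bar>0\<bar> * ((0 + ?nm x') * (0 + ?nm z'))) F"
      unfolding QX_def QZ_def
      by (rule tendsto_mult[OF tendsto_rabs[OF h0] tendsto_mult[OF tendsto_add[OF dX tendsto_const] tendsto_add[OF dZ tendsto_const]]])
    then show "((\<lambda>h. \<bar>h\<bar> * ((?nm (rl_diff (QX h) x') + ?nm x') * (?nm (rl_diff (QZ h) z') + ?nm z')))
        \<longlongrightarrow> 0) F" by simp
  qed
  have "((\<lambda>h. ?ip (QX h) z0 + ?ip x0 (QZ h) + h * ?ip (QX h) (QZ h)) \<longlongrightarrow> ?ip x' z0 + ?ip x0 z' + 0) F"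
    by (intro tendsto_add t1 t2 t3)
  then have "((\<lambda>h. ?ip (QX h) z0 + ?ip x0 (QZ h) + h * ?ip (QX h) (QZ h)) \<longlongrightarrow> ?ip x' z0 + ?ip x0 z') F"
    by (simp only: add_0_right)
  then show ?thesis
    by (rule iffD2[OF tendsto_cong[OF eq]])
qed

lemma at_within_nonbot:
  assumes "0 \<le> (s::real)"
  shows "at 0 within {-s..} \<noteq> bot"
proof
  assume "at 0 within {-s..} = bot"
  moreover have "at_right (0::real) \<le> at 0 within {-s..}" using assms by (intro at_le) auto
  ultimately have "at_right (0::real) = bot" by (simp add: bot_unique)
  then show False by simp
qed

lemma ev_within: "eventually (\<lambda>h. h \<noteq> x \<and> h \<in> S) (at x within S)"
  unfolding eventually_at_filter by (simp add: always_eventually)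

lemma weak_T:
  assumes XRL: "\<forall>t\<ge>0. in_RL2 a b m n (X t)"
    and X'RL: "in_RL2 a b m n (X' s)"
    and dX: "has_rl_deriv a b m n X X' s"
    and dT: "has_rl_deriv a b m n (\<lambda>t. T (X t)) (\<lambda>t. A (X t)) s"
    and Tmap: "\<And>u. in_RL2 a b m n u \<Longrightarrow> in_RL2 a b m n (T u)"
    and Amap: "\<And>u. in_RL2 a b m n u \<Longrightarrow> in_RL2 a b m n (A u)"
    and adjT: "is_adjoint a b m n m n T Ts"
    and w: "in_RL2 a b m n w" and s: "0 \<le> s"
  shows "rl_ip a b m n (X' s) (Ts w) = rl_ip a b m n (A (X s)) w"
proof -
  let ?ip = "rl_ip a b m n"
  let ?F = "at (0::real) within {-s..}"
  have Tsw: "in_RL2 a b m n (Ts w)" using adjT w unfolding is_adjoint_def by blast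
  have adj: "\<And>x y. in_RL2 a b m n x \<Longrightarrow> in_RL2 a b m n y \<Longrightarrow> ?ip (T x) y = ?ip x (Ts y)"
    using adjT unfolding is_adjoint_def by blast
  have Xs: "in_RL2 a b m n (X s)" using XRL s by simp
  have ev: "eventually (\<lambda>h. h \<noteq> 0 \<and> in_RL2 a b m n (X (s + h))) ?F"
    using ev_within[of 0 "{-s..}"] by eventually_elim (use XRL in auto)
  define QX where "QX h = rl_scale (1/h) (rl_diff (X (s + h)) (X s))" for h
  define QT where "QT h = rl_scale (1/h) (rl_diff (T (X (s + h))) (T (X s)))" for h
  have L1: "((\<lambda>h. ?ip (QX h) (Ts w)) \<longlongrightarrow> ?ip (X' s) (Ts w)) ?F"
  proof (rule lim_ip[OF _ X'RL Tsw])
    show "eventually (\<lambda>h. in_RL2 a b m n (QX h)) ?F"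
      using ev by eventually_elim (simp add: QX_def in_RL2_scale in_RL2_diff Xs)
    show "((\<lambda>h. rl_norm a b m n (rl_diff (QX h) (X' s))) \<longlongrightarrow> 0) ?F"
      using dX by (simp add: has_rl_deriv_def QX_def)
  qed
  have L2: "((\<lambda>h. ?ip (QT h) w) \<longlongrightarrow> ?ip (A (X s)) w) ?F"
  proof (rule lim_ip[OF _ Amap[OF Xs] w])
    show "eventually (\<lambda>h. in_RL2 a b m n (QT h)) ?F"
      using ev by eventually_elim (simp add: QT_def in_RL2_scale in_RL2_diff Xs Tmap)
    show "((\<lambda>h. rl_norm a b m n (rl_diff (QT h) (A (X s)))) \<longlongrightarrow> 0) ?F"
      using dT by (simp add: has_rl_deriv_def QT_def)
  qed
  have eq: "eventually (\<lambda>h. ?ip (QT h) w = ?ip (QX h) (Ts w)) ?F"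
    using ev
  proof eventually_elim
    case (elim h)
    then have h: "h \<noteq> 0" and Xh: "in_RL2 a b m n (X (s + h))" by auto
    have "?ip (QT h) w = (?ip (T (X (s + h))) w - ?ip (T (X s)) w) / h"
      unfolding QT_def by (rule ip_quot[OF h Tmap[OF Xh] Tmap[OF Xs] w])
    also have "\<dots> = (?ip (X (s + h)) (Ts w) - ?ip (X s) (Ts w)) / h"
      using adj[OF Xh w] adj[OF Xs w] by simp
    also have "\<dots> = ?ip (QX h) (Ts w)"
      unfolding QX_def by (rule ip_quot[OF h Xh Xs Tsw, symmetric])
    finally show ?case .
  qed
  have L2': "((\<lambda>h. ?ip (QX h) (Ts w)) \<longlongrightarrow> ?ip (A (X s)) w) ?F"
    using L2 by (rule iffD1[OF tendsto_cong[OF eq]])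
  show ?thesis
    by (rule tendsto_unique[OF at_within_nonbot[OF s] L1 L2'])
qed

lemma norm_scale_rl: "rl_norm a b m n (rl_scale c u) = \<bar>c\<bar> * rl_norm a b m n u"
proof -
  have "rl_ip a b m n (rl_scale c u) (rl_scale c u) = c\<^sup>2 * rl_ip a b m n u u"
    by (simp add: ip_scale_left ip_scale_right power2_eq_square)
  then show ?thesis by (simp add: rl_norm_def real_sqrt_mult)
qed

lemma neg_quot:
  "rl_norm a b m n (rl_diff (rl_scale (1/h) (rl_diff p q)) (rl_scale (-1) l)) =
   rl_norm a b m n (rl_diff (rl_scale (1/(-h)) (rl_diff p q)) l)"
proof -
  have "rl_diff (rl_scale (1/h) (rl_diff p q)) (rl_scale (-1) l) =
        rl_scale (-1) (rl_diff (rl_scale (1/(-h)) (rl_diff p q)) l)"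
    by (simp add: rl_diff_def rl_scale_def fun_eq_iff algebra_simps)
  then show ?thesis by (simp add: norm_scale_rl)
qed

lemma in_RL2_0: "in_RL2 a b k 0 u"
  by (simp add: in_RL2_def)

lemma duality:
  fixes a b :: real and m n nw nz :: nat
    and T A B C Ts As Bs Cs :: "rl2 \<Rightarrow> rl2"
  assumes T4: "is_4PI a b m n m n T" and A4: "is_4PI a b m n m n A"
    and B4: "is_4PI a b nw 0 m n B"
    and adjT: "is_adjoint a b m n m n T Ts" and adjA: "is_adjoint a b m n m n A As"
    and adjB: "is_adjoint a b nw 0 m n B Bs" and adjC: "is_adjoint a b m n nz 0 C Cs"
    and X: "aux_sol a b m n T A B v X" and Y: "aux_sol a b m n Ts As Cs vb Y"
    and t: "0 \<le> t"
  shows "rl_ip a b nz 0 (C (X t)) vb = rl_ip a b nw 0 v (Bs (Y t))"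
proof -
  let ?ip = "rl_ip a b m n" and ?nm = "rl_norm a b m n"
  have Tmap: "\<And>u. in_RL2 a b m n u \<Longrightarrow> in_RL2 a b m n (T u)" using is_4PI_RL2[OF T4] .
  have Amap: "\<And>u. in_RL2 a b m n u \<Longrightarrow> in_RL2 a b m n (A u)" using is_4PI_RL2[OF A4] .
  have Bv: "in_RL2 a b m n (B v)" using is_4PI_RL2[OF B4 in_RL2_0] .
  have Tsmap: "\<And>u. in_RL2 a b m n u \<Longrightarrow> in_RL2 a b m n (Ts u)" using adjT unfolding is_adjoint_def by blast
  have Asmap: "\<And>u. in_RL2 a b m n u \<Longrightarrow> in_RL2 a b m n (As u)" using adjA unfolding is_adjoint_def by blast
  have Csv: "in_RL2 a b m n (Cs vb)" using adjC in_RL2_0 unfolding is_adjoint_def by blast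
  have adT: "\<And>x y. in_RL2 a b m n x \<Longrightarrow> in_RL2 a b m n y \<Longrightarrow> ?ip (T x) y = ?ip x (Ts y)"
    using adjT unfolding is_adjoint_def by blast
  have adA: "\<And>x y. in_RL2 a b m n x \<Longrightarrow> in_RL2 a b m n y \<Longrightarrow> ?ip (A x) y = ?ip x (As y)"
    using adjA unfolding is_adjoint_def by blast
  have adB: "\<And>y. in_RL2 a b m n y \<Longrightarrow> ?ip (B v) y = rl_ip a b nw 0 v (Bs y)"
    using adjB in_RL2_0 unfolding is_adjoint_def by blast
  have adC: "\<And>x. in_RL2 a b m n x \<Longrightarrow> rl_ip a b nz 0 (C x) vb = ?ip x (Cs vb)"
    using adjC in_RL2_0 unfolding is_adjoint_def by blast
  have XRL: "\<forall>t\<ge>0. in_RL2 a b m n (X t)" and dTX: "\<forall>t\<ge>0. has_rl_deriv a b m n (\<lambda>t. T (X t)) (\<lambda>t. A (X t)) t"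
    and X0: "?nm (rl_diff (T (X 0)) (B v)) = 0"
    using X by (auto simp: aux_sol_def)
  obtain X' where X': "\<And>t. t \<ge> 0 \<Longrightarrow> in_RL2 a b m n (X' t) \<and> has_rl_deriv a b m n X X' t"
    using X unfolding aux_sol_def rl_C1_def by blast
  have YRL: "\<forall>t\<ge>0. in_RL2 a b m n (Y t)" and dTY: "\<forall>t\<ge>0. has_rl_deriv a b m n (\<lambda>t. Ts (Y t)) (\<lambda>t. As (Y t)) t"
    and Y0: "?nm (rl_diff (Ts (Y 0)) (Cs vb)) = 0"
    using Y by (auto simp: aux_sol_def)
  define \<phi> where "\<phi> s = ?ip (X s) (Ts (Y (t - s)))" for s
  have D: "(\<phi> has_field_derivative 0) (at s within {0..t})" if s: "s \<in> {0..t}" for s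
  proof -
    define u where "u = t - s"
    have s0: "0 \<le> s" and u0: "0 \<le> u" using s by (auto simp: u_def)
    let ?F = "at (0::real) within {-s..u}"
    define G where "G h = (\<phi> (s + h) - \<phi> s) / h" for h
    have Xs: "in_RL2 a b m n (X s)" using XRL s0 by simp
    have Yu: "in_RL2 a b m n (Y u)" using YRL u0 by simp
    have X's: "in_RL2 a b m n (X' s)" and dXs: "has_rl_deriv a b m n X X' s" using X'[OF s0] by auto
    have zd: "in_RL2 a b m n (rl_scale (-1) (As (Y u)))" by (intro in_RL2_scale Asmap Yu)
    have lim: "(G \<longlongrightarrow> ?ip (X' s) (Ts (Y u)) + ?ip (X s) (rl_scale (-1) (As (Y u)))) ?F"
      unfolding G_def \<phi>_def u_def[symmetric]
    proof (rule prod_rule[where X="\<lambda>h. X (s + h)" and Z="\<lambda>h. Ts (Y (t - (s + h)))"])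
      show "eventually (\<lambda>h. h \<noteq> 0 \<and> in_RL2 a b m n (X (s + h)) \<and> in_RL2 a b m n (Ts (Y (t - (s + h))))) ?F"
        using ev_within[of 0 "{-s..u}"] by eventually_elim (use XRL YRL Tsmap in \<open>auto simp: u_def\<close>)
      show "in_RL2 a b m n (X s)" by (rule Xs)
      show "in_RL2 a b m n (Ts (Y u))" by (intro Tsmap Yu)
      show "in_RL2 a b m n (X' s)" by (rule X's)
      show "in_RL2 a b m n (rl_scale (-1) (As (Y u)))" by (rule zd)
      show "((\<lambda>h. ?nm (rl_diff (rl_scale (1/h) (rl_diff (X (s + h)) (X s))) (X' s))) \<longlongrightarrow> 0) ?F"
        using dXs unfolding has_rl_deriv_def by (rule tendsto_mono[rotated]) (intro at_le, auto)
      show "((\<lambda>h. h) \<longlongrightarrow> 0) ?F" by (rule tendsto_ident_at)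
      have dY: "((\<lambda>k. ?nm (rl_diff (rl_scale (1/k) (rl_diff (Ts (Y (u + k))) (Ts (Y u)))) (As (Y u)))) \<longlongrightarrow> 0)
                 (at 0 within {-u..})"
        using dTY u0 unfolding has_rl_deriv_def by simp
      have fl: "filterlim (\<lambda>h. - h) (at 0 within {-u..}) ?F"
        unfolding filterlim_at
      proof
        show "eventually (\<lambda>h. - h \<in> {-u..} \<and> - h \<noteq> 0) ?F"
          using ev_within[of 0 "{-s..u}"] by eventually_elim auto
        show "((\<lambda>h. - h) \<longlongrightarrow> 0) ?F"
          using tendsto_minus[OF tendsto_ident_at[of "0::real" "{-s..u}"]] by simp
      qed
      have "((\<lambda>h. ?nm (rl_diff (rl_scale (1/(-h)) (rl_diff (Ts (Y (u + - h))) (Ts (Y u)))) (As (Y u)))) \<longlongrightarrow> 0) ?F"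
        using filterlim_compose[OF dY fl] by simp
      then show "((\<lambda>h. ?nm (rl_diff (rl_scale (1/h) (rl_diff (Ts (Y (t - (s + h)))) (Ts (Y u)))) (rl_scale (-1) (As (Y u))))) \<longlongrightarrow> 0) ?F"
        unfolding neg_quot by (simp add: u_def algebra_simps)
    qed
    have "?ip (X' s) (Ts (Y u)) = ?ip (A (X s)) (Y u)"
      by (rule weak_T[OF XRL X's dXs dTX[rule_format, OF s0] Tmap Amap adjT Yu s0])
    moreover have "?ip (X s) (rl_scale (-1) (As (Y u))) = - ?ip (A (X s)) (Y u)"
      using adA[OF Xs Yu] by (simp add: ip_scale_right)
    ultimately have limG: "(G \<longlongrightarrow> 0) ?F" using lim by simp
    have fl2: "filterlim (\<lambda>y. y - s) ?F (at s within {0..t})"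
      unfolding filterlim_at
    proof
      show "eventually (\<lambda>y. y - s \<in> {-s..u} \<and> y - s \<noteq> 0) (at s within {0..t})"
        using ev_within[of s "{0..t}"] by eventually_elim (auto simp: u_def)
      show "((\<lambda>y. y - s) \<longlongrightarrow> 0) (at s within {0..t})"
        using tendsto_diff[OF tendsto_ident_at[of s "{0..t}"] tendsto_const[of s]] by simp
    qed
    have "((\<lambda>y. G (y - s)) \<longlongrightarrow> 0) (at s within {0..t})"
      using filterlim_compose[OF limG fl2] .
    then show ?thesis
      unfolding has_field_derivative_iff G_def by simp
  qed
  obtain c where c: "\<forall>x\<in>{0..t}. \<phi> x = c"
    using has_field_derivative_zero_constant[of "{0..t}" \<phi>] D by auto
  have "\<phi> 0 = \<phi> t" using c t by auto
  moreover have "\<phi> 0 = rl_ip a b nw 0 v (Bs (Y t))"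
  proof -
    have X0RL: "in_RL2 a b m n (X 0)" using XRL by simp
    have Yt: "in_RL2 a b m n (Y t)" using YRL t by simp
    have "\<phi> 0 = ?ip (T (X 0)) (Y t)" unfolding \<phi>_def using adT[OF X0RL Yt] by simp
    also have "\<dots> = ?ip (B v) (Y t)" by (rule ip_norm0_eq[OF Tmap[OF X0RL] Bv Yt X0])
    also have "\<dots> = rl_ip a b nw 0 v (Bs (Y t))" by (rule adB[OF Yt])
    finally show ?thesis .
  qed
  moreover have "\<phi> t = rl_ip a b nz 0 (C (X t)) vb"
  proof -
    have Xt: "in_RL2 a b m n (X t)" using XRL t by simp
    have Y0RL: "in_RL2 a b m n (Y 0)" using YRL by simp
    have "\<phi> t = ?ip (Ts (Y 0)) (X t)" unfolding \<phi>_def by (simp add: ip_sym)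
    also have "\<dots> = ?ip (Cs vb) (X t)" by (rule ip_norm0_eq[OF Tsmap[OF Y0RL] Csv Xt Y0])
    also have "\<dots> = rl_ip a b nz 0 (C (X t)) vb" using adC[OF Xt] by (simp add: ip_sym)
    finally show ?thesis .
  qed
  ultimately show ?thesis by simp
qed

lemma ip_fin: "rl_ip a b k 0 u w = (\<Sum>i<k. fst u i * fst w i)"
  by (simp add: rl_ip_def)

lemma norm_sq_ip: "rl_ip a b k 0 u u = (rl_norm a b k 0 u)\<^sup>2"
  by (simp add: norm_sq_rl)

lemma bound_lemma:
  fixes nw nz :: nat and G H :: "rl2 \<Rightarrow> rl2"
  assumes dual: "\<And>wb. \<exists>Y. PY wb Y"
    and ident: "\<And>wb Y. PY wb Y \<Longrightarrow> rl_ip a b nz 0 z wb = rl_ip a b nw 0 v (H (Y t))"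
    and v: "rl_norm a b nw 0 v = 1"
  shows "\<exists>wb Y. rl_norm a b nz 0 wb = 1 \<and> PY wb Y \<and> rl_norm a b nz 0 z \<le> rl_norm a b nw 0 (H (Y t))
           \<or> rl_norm a b nz 0 z = 0"
proof (cases "rl_norm a b nz 0 z = 0")
  case True then show ?thesis by blast
next
  case False
  let ?r = "rl_norm a b nz 0 z"
  have r: "?r > 0" using False norm_nonneg_rl[of a b nz 0 z] by linarith
  define wb where "wb = rl_scale (1 / ?r) z"
  have wb1: "rl_norm a b nz 0 wb = 1" unfolding wb_def using r by (simp add: norm_scale_rl)
  obtain Y where Y: "PY wb Y" using dual by blast
  have "rl_ip a b nz 0 z wb = (1 / ?r) * ?r\<^sup>2"
    unfolding wb_def by (simp add: ip_scale_right norm_sq_rl)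
  also have "\<dots> = ?r" using r by (simp add: power2_eq_square)
  finally have "?r = rl_ip a b nw 0 v (H (Y t))" using ident[OF Y] by simp
  also have "\<dots> \<le> \<bar>rl_ip a b nw 0 v (H (Y t))\<bar>" by simp
  also have "\<dots> \<le> rl_norm a b nw 0 v * rl_norm a b nw 0 (H (Y t))"
    by (rule ip_CS) (simp_all add: in_RL2_0)
  finally have "?r \<le> rl_norm a b nw 0 (H (Y t))" using v by simp
  then show ?thesis using wb1 Y by (intro exI[of _ wb] exI[of _ Y] disjI1) simp
qed

theorem theorem1:
  fixes a b :: real and m n nw nz :: nat
    and T A B C Ts As Bs Cs :: "rl2 \<Rightarrow> rl2"
  assumes "a < b"
    and "is_4PI a b m n m n T" and "is_4PI a b m n m n A"
    and "is_4PI a b nw 0 m n B" and "is_4PI a b m n nz 0 C"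
    and "is_adjoint a b m n m n T Ts" and "is_adjoint a b m n m n A As"
    and "is_adjoint a b nw 0 m n B Bs" and "is_adjoint a b m n nz 0 C Cs"
    and "well_posed a b m n nw T A B"
    and "well_posed a b m n nz Ts As Cs"
  shows "ip_norm a b m n nw nz T A B C = ip_norm a b m n nz nw Ts As Cs Bs"
proof -
  note D = duality[OF assms(2,3,4,6,7,8,9)]
  have wp1: "\<And>v. \<exists>X. aux_sol a b m n T A B v X"
    using assms(10) in_RL2_0 unfolding well_posed_def by blast
  have wp2: "\<And>v. \<exists>X. aux_sol a b m n Ts As Cs v X"
    using assms(11) in_RL2_0 unfolding well_posed_def by blast
  show ?thesis
    unfolding ip_norm_def
  proof (rule antisym)
    show "Sup {ennreal (rl_norm a b nz 0 (C (X t))) | v X t.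
            in_RL2 a b nw 0 v \<and> rl_norm a b nw 0 v = 1 \<and> aux_sol a b m n T A B v X \<and> t \<ge> 0}
       \<le> Sup {ennreal (rl_norm a b nw 0 (Bs (X t))) | v X t.
            in_RL2 a b nz 0 v \<and> rl_norm a b nz 0 v = 1 \<and> aux_sol a b m n Ts As Cs v X \<and> t \<ge> 0}"
      (is "Sup ?S1 \<le> Sup ?S2")
    proof (rule Sup_least)
      fix e assume "e \<in> ?S1"
      then obtain v X t where e: "e = ennreal (rl_norm a b nz 0 (C (X t)))" and v: "rl_norm a b nw 0 v = 1"
        and X: "aux_sol a b m n T A B v X" and t: "t \<ge> 0" by blast
      from bound_lemma[where PY="\<lambda>wb Y. aux_sol a b m n Ts As Cs wb Y" and z="C (X t)" and H=Bs and v=v and t=t and a=a and b=b,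
          OF wp2 _ v] D[OF X _ t]
      obtain wb Y where "rl_norm a b nz 0 wb = 1 \<and> aux_sol a b m n Ts As Cs wb Y \<and>
            rl_norm a b nz 0 (C (X t)) \<le> rl_norm a b nw 0 (Bs (Y t)) \<or> rl_norm a b nz 0 (C (X t)) = 0"
        by blast
      then show "e \<le> Sup ?S2"
      proof
        assume h: "rl_norm a b nz 0 wb = 1 \<and> aux_sol a b m n Ts As Cs wb Y \<and>
            rl_norm a b nz 0 (C (X t)) \<le> rl_norm a b nw 0 (Bs (Y t))"
        then have "ennreal (rl_norm a b nw 0 (Bs (Y t))) \<in> ?S2" using t in_RL2_0 by blast
        then have "ennreal (rl_norm a b nw 0 (Bs (Y t))) \<le> Sup ?S2" by (rule Sup_upper)
        moreover have "e \<le> ennreal (rl_norm a b nw 0 (Bs (Y t)))" using h e by (simp add: ennreal_leI)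
        ultimately show ?thesis by (rule order_trans[rotated])
      next
        assume "rl_norm a b nz 0 (C (X t)) = 0"
        then show ?thesis using e by simp
      qed
    qed
  next
    show "Sup {ennreal (rl_norm a b nw 0 (Bs (X t))) | v X t.
            in_RL2 a b nz 0 v \<and> rl_norm a b nz 0 v = 1 \<and> aux_sol a b m n Ts As Cs v X \<and> t \<ge> 0}
       \<le> Sup {ennreal (rl_norm a b nz 0 (C (X t))) | v X t.
            in_RL2 a b nw 0 v \<and> rl_norm a b nw 0 v = 1 \<and> aux_sol a b m n T A B v X \<and> t \<ge> 0}"
      (is "Sup ?S2 \<le> Sup ?S1")
    proof (rule Sup_least)
      fix e assume "e \<in> ?S2"
      then obtain vb Y t where e: "e = ennreal (rl_norm a b nw 0 (Bs (Y t)))" and vb: "rl_norm a b nz 0 vb = 1"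
        and Y: "aux_sol a b m n Ts As Cs vb Y" and t: "t \<ge> 0" by blast
      have ident: "rl_ip a b nw 0 (Bs (Y t)) w = rl_ip a b nz 0 vb (C (X t))"
        if "aux_sol a b m n T A B w X" for w X
        using D[OF that Y t] ip_sym by metis
      have "\<exists>w X. rl_norm a b nw 0 w = 1 \<and> aux_sol a b m n T A B w X \<and>
            rl_norm a b nw 0 (Bs (Y t)) \<le> rl_norm a b nz 0 (C (X t)) \<or> rl_norm a b nw 0 (Bs (Y t)) = 0"
        apply (rule bound_lemma[where PY="\<lambda>w X. aux_sol a b m n T A B w X" and z="Bs (Y t)" and H=C and v=vb and t=t
          and nz=nw and nw=nz and a=a and b=b])
          apply (rule wp1)
         apply (erule ident)
        apply (rule vb)
        done
      then obtain w X where "rl_norm a b nw 0 w = 1 \<and> aux_sol a b m n T A B w X \<and>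
            rl_norm a b nw 0 (Bs (Y t)) \<le> rl_norm a b nz 0 (C (X t)) \<or> rl_norm a b nw 0 (Bs (Y t)) = 0"
        by blast
      then show "e \<le> Sup ?S1"
      proof
        assume h: "rl_norm a b nw 0 w = 1 \<and> aux_sol a b m n T A B w X \<and>
            rl_norm a b nw 0 (Bs (Y t)) \<le> rl_norm a b nz 0 (C (X t))"
        then have "ennreal (rl_norm a b nz 0 (C (X t))) \<in> ?S1" using t in_RL2_0 by blast
        then have "ennreal (rl_norm a b nz 0 (C (X t))) \<le> Sup ?S1" by (rule Sup_upper)
        moreover have "e \<le> ennreal (rl_norm a b nz 0 (C (X t)))" using h e by (simp add: ennreal_leI)
        ultimately show ?thesis by (rule order_trans[rotated])
      next
        assume "rl_norm a b nw 0 (Bs (Y t)) = 0"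
        then show ?thesis using e by simp
      qed
    qed
  qed
qed

end
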